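(* Let $\overline{G}$ be the roommate diversity game with red agents $r_1,r_2,r_3$, blue agents $b_1,\dots,b_6$, room size $3$ and the trichotomous preferences described in the context. Then $\overline{G}$ has no popular outcome; in particular, a popular outcome is not guaranteed to exist in a roommate diversity game.
   Context: A roommate diversity game consists of disjoint finite sets $R$ (red agents) and $B$ (blue agents), a room size $s$ with $s$ dividing $|R\cup B|$, and for each agent a weak order over the fractions $\{j/s: 0\le j\le s\}$. An outcome is a partition of $R\cup B$ into rooms of size $s$; $\pi(a)$ is the room containing $a$ and $\theta(C)=|C\cap R|/|C|$. Agent $a$ prefers $\pi$ to $\pi'$ if it strictly prefers $\theta(\pi(a))$ to $\theta(\pi'(a))$; $N(\pi,\pi')$ is the set of agents preferring $\pi$ to $\pi'$, $\phi(\pi,\pi')=|N(\pi,\pi')|-|N(\pi',\pi)|$, and $\pi$ is popular if $\phi(\pi,\pi')\ge 0$ for every outcome $\pi'$. A trichotomous preference is given by a partition of the fractions into sets $D_a^+$ (approved), $D_a^n$ (neutral), $D_a^-$ (disapproved), possibly empty, with approved $\succ$ neutral $\succ$ disapproved and indifference within each set. In $\overline{G}$ ($s=3$): $r_1$: $D^+=\{1/3\}$, $D^-=\{2/3,1\}$; $r_2,r_3$: $D^+=\{2/3\}$, $D^-=\{1/3,1\}$; $b_1,\dots,b_4$: $D^+=\{1/3\}$, $D^n=\{2/3\}$, $D^-=\{0\}$; $b_5,b_6$: $D^+=\{0\}$, $D^-=\{1/3,2/3\}$ (a red agent is never in a room of fraction $0$, a blue agent never in one of fraction $1$). *)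

theory Defs
  imports Complex_Main "HOL-Library.Disjoint_Sets"
begin

(* General roommate diversity game. Agents of type 'a; R red, B blue.
   Preferences: pref a x y means agent a weakly prefers fraction x to fraction y. *)

definition theta :: "'a set \<Rightarrow> 'a set \<Rightarrow> rat" where
  "theta R C = of_nat (card (C \<inter> R)) / of_nat (card C)"

definition is_outcome :: "'a set \<Rightarrow> 'a set \<Rightarrow> nat \<Rightarrow> 'a set set \<Rightarrow> bool" where
  "is_outcome R B s P \<longleftrightarrow> partition_on (R \<union> B) P \<and> (\<forall>C\<in>P. card C = s)"

definition room :: "'a set set \<Rightarrow> 'a \<Rightarrow> 'a set" where
  "room P a = (THE C. C \<in> P \<and> a \<in> C)"

definition strict_pref :: "('a \<Rightarrow> rat \<Rightarrow> rat \<Rightarrow> bool) \<Rightarrow> 'a \<Rightarrow> rat \<Rightarrow> rat \<Rightarrow> bool" where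
  "strict_pref pref a x y \<longleftrightarrow> pref a x y \<and> \<not> pref a y x"

definition N_pref :: "'a set \<Rightarrow> 'a set \<Rightarrow> ('a \<Rightarrow> rat \<Rightarrow> rat \<Rightarrow> bool) \<Rightarrow> 'a set set \<Rightarrow> 'a set set \<Rightarrow> 'a set" where
  "N_pref R B pref P P' = {a \<in> R \<union> B. strict_pref pref a (theta R (room P a)) (theta R (room P' a))}"

definition phi :: "'a set \<Rightarrow> 'a set \<Rightarrow> ('a \<Rightarrow> rat \<Rightarrow> rat \<Rightarrow> bool) \<Rightarrow> 'a set set \<Rightarrow> 'a set set \<Rightarrow> int" where
  "phi R B pref P P' = int (card (N_pref R B pref P P')) - int (card (N_pref R B pref P' P))"

definition popular :: "'a set \<Rightarrow> 'a set \<Rightarrow> nat \<Rightarrow> ('a \<Rightarrow> rat \<Rightarrow> rat \<Rightarrow> bool) \<Rightarrow> 'a set set \<Rightarrow> bool" where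
  "popular R B s pref P \<longleftrightarrow> is_outcome R B s P \<and> (\<forall>P'. is_outcome R B s P' \<longrightarrow> phi R B pref P P' \<ge> 0)"

(* Trichotomous preference from approved / neutral / disapproved sets (a partition of the fractions):
   approved > neutral > disapproved, indifferent within each class. Encoded by a score. *)
definition tri_score :: "rat set \<Rightarrow> rat set \<Rightarrow> rat \<Rightarrow> nat" where
  "tri_score Dplus Dneutral x = (if x \<in> Dplus then 2 else if x \<in> Dneutral then 1 else 0)"

definition tri_pref :: "rat set \<Rightarrow> rat set \<Rightarrow> rat \<Rightarrow> rat \<Rightarrow> bool" where
  "tri_pref Dplus Dneutral x y \<longleftrightarrow> tri_score Dplus Dneutral x \<ge> tri_score Dplus Dneutral y"

datatype agent = r1 | r2 | r3 | b1 | b2 | b3 | b4 | b5 | b6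

definition Gbar_R :: "agent set" where "Gbar_R = {r1, r2, r3}"
definition Gbar_B :: "agent set" where "Gbar_B = {b1, b2, b3, b4, b5, b6}"

(* Disapproved sets are the complements of approved \<union> neutral within {0,1/3,2/3,1};
   fractions 0 for red and 1 for blue never occur, as stated in the paper. *)
fun Gbar_pref :: "agent \<Rightarrow> rat \<Rightarrow> rat \<Rightarrow> bool" where
  "Gbar_pref r1 = tri_pref {1/3} {}"
| "Gbar_pref r2 = tri_pref {2/3} {}"
| "Gbar_pref r3 = tri_pref {2/3} {}"
| "Gbar_pref b1 = tri_pref {1/3} {2/3}"
| "Gbar_pref b2 = tri_pref {1/3} {2/3}"
| "Gbar_pref b3 = tri_pref {1/3} {2/3}"
| "Gbar_pref b4 = tri_pref {1/3} {2/3}"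
| "Gbar_pref b5 = tri_pref {0} {}"
| "Gbar_pref b6 = tri_pref {0} {}"

end

theory Submission
  imports Defs
begin

definition agents :: "agent list" where "agents = [r1,r2,r3,b1,b2,b3,b4,b5,b6]"
definition Rl :: "agent list" where "Rl = [r1,r2,r3]"
definition Bl :: "agent list" where "Bl = [b1,b2,b3,b4,b5,b6]"

lemma in_agents: "x \<in> set agents"
  by (cases x) (auto simp: agents_def)

lemma UNIV_agents: "UNIV = set agents"
  using in_agents by blast

lemma RB_UNIV: "Gbar_R \<union> Gbar_B = UNIV"
  unfolding Gbar_R_def Gbar_B_def using in_agents by (auto simp: agents_def)

lemma notR_B: "x \<notin> Gbar_R \<Longrightarrow> x \<in> Gbar_B"
  using RB_UNIV by blast

lemma R_Rl: "x \<in> Gbar_R \<Longrightarrow> x \<in> set Rl"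
  by (auto simp: Gbar_R_def Rl_def)
lemma B_Bl: "x \<in> Gbar_B \<Longrightarrow> x \<in> set Bl"
  by (auto simp: Gbar_B_def Bl_def)

lemma card_UNIV_agent: "card (UNIV :: agent set) = 9"
  unfolding UNIV_agents by (simp add: agents_def)

lemma finU: "finite (UNIV :: agent set)"
  unfolding UNIV_agents by simp

lemma card_filter_agents: "card {a. Q a} = length (filter Q agents)"
proof -
  have "{a. Q a} = set (filter Q agents)" using in_agents by auto
  moreover have "distinct (filter Q agents)" by (simp add: agents_def)
  ultimately show ?thesis by (metis distinct_card)
qed

definition vecP :: "agent set set \<Rightarrow> agent \<Rightarrow> nat" where
  "vecP P a = card (room P a \<inter> Gbar_R)"

fun sc :: "agent \<Rightarrow> nat \<Rightarrow> nat" where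
  "sc r1 k = (if k = 1 then 2 else 0)"
| "sc r2 k = (if k = 2 then 2 else 0)"
| "sc r3 k = (if k = 2 then 2 else 0)"
| "sc b1 k = (if k = 1 then 2 else if k = 2 then 1 else 0)"
| "sc b2 k = (if k = 1 then 2 else if k = 2 then 1 else 0)"
| "sc b3 k = (if k = 1 then 2 else if k = 2 then 1 else 0)"
| "sc b4 k = (if k = 1 then 2 else if k = 2 then 1 else 0)"
| "sc b5 k = (if k = 0 then 2 else 0)"
| "sc b6 k = (if k = 0 then 2 else 0)"

lemma le3: "(k::nat) \<le> 3 \<Longrightarrow> k = 0 \<or> k = 1 \<or> k = 2 \<or> k = 3" by arith

lemma sc_ok:
  assumes "k \<le> 3" "k' \<le> 3"
  shows "strict_pref Gbar_pref a (of_nat k / 3) (of_nat k' / 3) \<longleftrightarrow> sc a k' < sc a k"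
  using le3[OF assms(1)] le3[OF assms(2)]
  by (elim disjE; cases a) (simp_all add: strict_pref_def tri_pref_def tri_score_def)

definition PhiL :: "(agent \<Rightarrow> nat) \<Rightarrow> (agent \<Rightarrow> nat) \<Rightarrow> int" where
  "PhiL v w = int (length (filter (\<lambda>a. sc a (w a) < sc a (v a)) agents))
            - int (length (filter (\<lambda>a. sc a (v a) < sc a (w a)) agents))"

lemma room_eq:
  assumes "partition_on A P" "C \<in> P" "a \<in> C"
  shows "room P a = C"
  unfolding room_def
proof (rule the_equality)
  show "C \<in> P \<and> a \<in> C" using assms by blast
  fix C' assume "C' \<in> P \<and> a \<in> C'"
  then show "C' = C" using assms partition_onD2[OF assms(1)]
    unfolding disjoint_def by blast
qed

lemma room_in:
  assumes "partition_on A P" "a \<in> A"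
  shows "room P a \<in> P \<and> a \<in> room P a"
proof -
  obtain C where "C \<in> P" "a \<in> C" using partition_onD1[OF assms(1)] assms(2) by blast
  then show ?thesis using room_eq[OF assms(1)] by simp
qed

lemma room3:
  assumes "partition_on A {C1,C2,C3}" "a \<in> C1 \<union> C2 \<union> C3"
  shows "room {C1,C2,C3} a = (if a \<in> C1 then C1 else if a \<in> C2 then C2 else C3)"
  using assms room_eq[OF assms(1)] by auto

locale outc =
  fixes P :: "agent set set"
  assumes out: "is_outcome Gbar_R Gbar_B 3 P"
begin

lemma part: "partition_on UNIV P"
  using out RB_UNIV unfolding is_outcome_def by simp

lemma F1: "room P a \<in> P" "a \<in> room P a"
  using room_in[OF part] by auto

lemma F2: "b \<in> room P a \<Longrightarrow> room P b = room P a"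
  using room_eq[OF part F1(1)] by blast

lemma F3: "card (room P a) = 3"
  using out F1 unfolding is_outcome_def by blast

lemma sym: "b \<in> room P a \<Longrightarrow> a \<in> room P b"
  using F2 F1 by metis

lemma vec_le: "vecP P a \<le> 3"
  unfolding vecP_def using F3 card_mono[of "room P a" "room P a \<inter> Gbar_R"]
  by (metis F3 Int_lower1 card.infinite card_mono zero_neq_numeral)

lemma theta_eq: "theta Gbar_R (room P a) = of_nat (vecP P a) / 3"
  unfolding theta_def vecP_def using F3 by (simp add: Int_commute)

end

lemma phi_link:
  assumes "outc P" "outc P'"
  shows "phi Gbar_R Gbar_B Gbar_pref P P' = PhiL (vecP P) (vecP P')"
proof -
  have N: "N_pref Gbar_R Gbar_B Gbar_pref Q Q' = {a. sc a (vecP Q' a) < sc a (vecP Q a)}"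
    if "outc Q" "outc Q'" for Q Q'
    unfolding N_pref_def RB_UNIV outc.theta_eq[OF that(1)] outc.theta_eq[OF that(2)]
    using sc_ok[OF outc.vec_le[OF that(1)] outc.vec_le[OF that(2)]] by simp
  show ?thesis
    unfolding phi_def PhiL_def N[OF assms] N[OF assms(2,1)] card_filter_agents ..
qed


fun isR :: "agent \<Rightarrow> bool" where
  "isR r1 = True" | "isR r2 = True" | "isR r3 = True" | "isR _ = False"

lemma isR_iff: "isR a \<longleftrightarrow> a \<in> Gbar_R"
  by (cases a) (auto simp: Gbar_R_def)

definition vA :: "agent \<Rightarrow> nat" where "vA a = (if isR a then 3 else 0)"
definition vB :: "agent \<Rightarrow> nat" where "vB a = 1"
definition vC :: "agent \<Rightarrow> agent \<Rightarrow> agent \<Rightarrow> agent \<Rightarrow> agent \<Rightarrow> nat" where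
  "vC \<rho> \<beta> x y a = (if isR a then (if a = \<rho> then 1 else 2) else if a = \<beta> then 2
      else if a = x \<or> a = y then 1 else 0)"

definition Ws :: "(agent \<times> agent \<times> agent) list" where
  "Ws = [(b4,b2,b3),(b3,b2,b4),(b2,b3,b4),(b1,b3,b4),(b4,b1,b3),(b3,b1,b4),(b2,b1,b4),(b1,b2,b4)]"

definition vCt :: "agent \<times> agent \<times> agent \<Rightarrow> agent \<Rightarrow> nat" where
  "vCt t = (case t of (\<beta>,x,y) \<Rightarrow> vC r1 \<beta> x y)"

definition beaten :: "(agent \<Rightarrow> nat) \<Rightarrow> bool" where
  "beaten v = list_ex (\<lambda>t. PhiL v (vCt t) < 0) Ws"

lemma check_A: "beaten vA"
  by code_simp

lemma check_B: "beaten vB"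
  by code_simp

lemma check_C_all: "list_all (\<lambda>\<rho>. list_all (\<lambda>\<beta>. list_all (\<lambda>x. list_all (\<lambda>y.
   \<not> (x \<noteq> y \<and> x \<noteq> \<beta> \<and> y \<noteq> \<beta>) \<or> beaten (vC \<rho> \<beta> x y)) Bl) Bl) Bl) Rl"
  by code_simp


lemma card3_one:
  assumes "card C = 3" "a \<in> C"
  obtains x y where "C = {a,x,y}" "x \<noteq> y" "x \<noteq> a" "y \<noteq> a"
proof -
  have fin: "finite C" using assms(1) by (metis card.infinite zero_neq_numeral)
  have "card (C - {a}) = 2" using assms fin by simp
  then obtain x y where xy: "C - {a} = {x,y}" "x \<noteq> y" by (meson card_2_iff)
  have "C = insert a (C - {a})" using assms(2) by blast
  then have "C = {a,x,y}" using xy(1) by simp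
  moreover have "x \<noteq> a" "y \<noteq> a" using xy(1) by (metis Diff_iff insertCI singletonI)+
  ultimately show ?thesis using xy(2) that by blast
qed

lemma card3_two:
  assumes "card C = 3" "a \<in> C" "b \<in> C" "a \<noteq> b"
  obtains c where "C = {a,b,c}" "c \<noteq> a" "c \<noteq> b"
proof -
  obtain x y where C: "C = {a,x,y}" "x \<noteq> y" "x \<noteq> a" "y \<noteq> a"
    using card3_one[OF assms(1,2)] by metis
  show ?thesis
  proof (cases "b = x")
    case True
    then show ?thesis using C by (intro that[of y]) auto
  next
    case False
    then have "b = y" using assms(3,4) C(1) by simp
    then show ?thesis using C by (intro that[of x]) auto
  qed
qed

context outc
begin

lemma caseA:
  assumes "r2 \<in> room P r1" "r3 \<in> room P r1"
  shows "vecP P = vA"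
proof -
  have sub: "Gbar_R \<subseteq> room P r1" using assms F1 by (auto simp: Gbar_R_def)
  have fin: "finite (room P r1)" using F3 by (metis card.infinite zero_neq_numeral)
  have cR: "card Gbar_R = 3" by (simp add: Gbar_R_def)
  have eq: "room P r1 = Gbar_R" using card_subset_eq[OF fin sub] F3 cR by simp
  show ?thesis
  proof
    fix a
    show "vecP P a = vA a"
    proof (cases "a \<in> Gbar_R")
      case True
      then have "room P a = Gbar_R" using F2 eq by metis
      then show ?thesis using True cR by (simp add: vecP_def vA_def isR_iff)
    next
      case False
      have "room P a \<inter> Gbar_R = {}"
      proof (rule ccontr)
        assume "room P a \<inter> Gbar_R \<noteq> {}"
        then obtain r where "r \<in> room P a" "r \<in> Gbar_R" by blast
        then have "a \<in> room P r" using sym by blast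
        moreover have "room P r = Gbar_R" using \<open>r \<in> Gbar_R\<close> F2 eq by metis
        ultimately show False using False by simp
      qed
      then show ?thesis using False by (simp add: vecP_def vA_def isR_iff)
    qed
  qed
qed

lemma caseB:
  assumes "r2 \<notin> room P r1" "r3 \<notin> room P r1" "r3 \<notin> room P r2"
  shows "vecP P = vB"
proof -
  have n1: "r1 \<notin> room P r2" "r1 \<notin> room P r3" "r2 \<notin> room P r3"
    using assms sym[of r1 r2] sym[of r1 r3] sym[of r2 r3] by auto
  have dj: "room P a \<inter> room P b = {}" if "b \<notin> room P a" for a b
  proof (rule ccontr)
    assume "room P a \<inter> room P b \<noteq> {}"
    then obtain c where c: "c \<in> room P a" "c \<in> room P b" by blast
    have "room P c = room P a" "room P c = room P b" using F2[OF c(1)] F2[OF c(2)] by auto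
    then show False using that F1(2)[of b] by simp
  qed
  have d12: "room P r1 \<inter> room P r2 = {}" using dj assms by blast
  have d13: "room P r1 \<inter> room P r3 = {}" using dj assms by blast
  have d23: "room P r2 \<inter> room P r3 = {}" using dj assms by blast
  have fin: "finite (room P a)" for a using F3 by (metis card.infinite zero_neq_numeral)
  have c12: "card (room P r1 \<union> room P r2) = 6"
    using card_Un_disjoint[OF fin fin d12] F3 by simp
  have d123: "(room P r1 \<union> room P r2) \<inter> room P r3 = {}" using d13 d23 by blast
  have "card (room P r1 \<union> room P r2 \<union> room P r3) = 9"
    using card_Un_disjoint[OF _ fin d123] c12 F3 fin by simp
  then have U: "room P r1 \<union> room P r2 \<union> room P r3 = UNIV"
    using card_subset_eq[OF finU subset_UNIV] card_UNIV_agent by simp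
  have R1: "room P r1 \<inter> Gbar_R = {r1}" using assms F1 by (auto simp: Gbar_R_def)
  have R2: "room P r2 \<inter> Gbar_R = {r2}" using assms n1 F1 by (auto simp: Gbar_R_def)
  have R3: "room P r3 \<inter> Gbar_R = {r3}" using n1 F1 by (auto simp: Gbar_R_def)
  show ?thesis
  proof
    fix a
    have "a \<in> room P r1 \<or> a \<in> room P r2 \<or> a \<in> room P r3" using U by blast
    then have "room P a = room P r1 \<or> room P a = room P r2 \<or> room P a = room P r3"
      using F2 by blast
    then show "vecP P a = vB a" unfolding vecP_def vB_def using R1 R2 R3 by auto
  qed
qed

lemma caseC:
  assumes R: "Gbar_R = {\<rho>,p,q}" and d: "\<rho> \<noteq> p" "\<rho> \<noteq> q" "p \<noteq> q"
    and qp: "q \<in> room P p" and rp: "\<rho> \<notin> room P p"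
  shows "\<exists>\<beta> x y. \<beta> \<in> Gbar_B \<and> x \<in> Gbar_B \<and> y \<in> Gbar_B \<and> x \<noteq> y \<and> x \<noteq> \<beta> \<and> y \<noteq> \<beta>
          \<and> vecP P = vC \<rho> \<beta> x y"
proof -
  obtain \<beta> where Cp: "room P p = {p,q,\<beta>}" "\<beta> \<noteq> p" "\<beta> \<noteq> q"
    using card3_two[OF F3 F1(2) qp d(3)] by blast
  have bR: "\<beta> \<notin> Gbar_R" using Cp rp R by auto
  obtain x y where Cr: "room P \<rho> = {\<rho>,x,y}" "x \<noteq> y" "x \<noteq> \<rho>" "y \<noteq> \<rho>"
    using card3_one[OF F3 F1(2)] by blast
  have rq: "room P q = room P p" using F2 qp by blast
  have nin: "z \<notin> room P p" if "z \<in> room P \<rho>" for z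
    using that F2 rp F1 by metis
  have xR: "x \<notin> Gbar_R" "y \<notin> Gbar_R" using nin Cr Cp R F1 by auto
  have xb: "x \<noteq> \<beta>" "y \<noteq> \<beta>" using nin Cr Cp by auto
  have Ip: "room P p \<inter> Gbar_R = {p,q}" using Cp R bR by auto
  have Ir: "room P \<rho> \<inter> Gbar_R = {\<rho>}" using Cr R xR by auto
  have "vecP P = vC \<rho> \<beta> x y"
  proof
    fix a
    show "vecP P a = vC \<rho> \<beta> x y a"
    proof (cases "a \<in> room P p")
      case True
      then have "vecP P a = 2" using F2 Ip d by (simp add: vecP_def)
      moreover have "a = p \<or> a = q \<or> a = \<beta>" using True Cp by auto
      ultimately show ?thesis using R d bR by (auto simp: vC_def isR_iff)
    next
      case False
      note F = False
      show ?thesis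
      proof (cases "a \<in> room P \<rho>")
        case True
        then have "vecP P a = 1" using F2 Ir by (simp add: vecP_def)
        moreover have "a = \<rho> \<or> a = x \<or> a = y" using True Cr by auto
        ultimately show ?thesis using R d xR xb by (auto simp: vC_def isR_iff)
      next
        case False
        have "room P a \<inter> Gbar_R = {}"
        proof (rule ccontr)
          assume "room P a \<inter> Gbar_R \<noteq> {}"
          then obtain r where "r \<in> room P a" "r \<in> Gbar_R" by blast
          then have "a \<in> room P r" using sym by blast
          then show False using \<open>r \<in> Gbar_R\<close> R rq F False by auto
        qed
        then have "vecP P a = 0" by (simp add: vecP_def)
        moreover have "a \<notin> Gbar_R" "a \<noteq> \<beta>" "a \<noteq> x" "a \<noteq> y"
          using F False R F1 Cp Cr rq by auto
        ultimately show ?thesis by (simp add: vC_def isR_iff)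
      qed
    qed
  qed
  then show ?thesis using xR bR xb Cr notR_B by blast
qed

lemma classify:
  "vecP P = vA \<or> vecP P = vB \<or> (\<exists>\<rho> \<beta> x y. \<rho> \<in> Gbar_R \<and> \<beta> \<in> Gbar_B \<and> x \<in> Gbar_B \<and> y \<in> Gbar_B
     \<and> x \<noteq> y \<and> x \<noteq> \<beta> \<and> y \<noteq> \<beta> \<and> vecP P = vC \<rho> \<beta> x y)"
proof -
  have R1: "Gbar_R = {r3,r1,r2}" "Gbar_R = {r2,r1,r3}" "Gbar_R = {r1,r2,r3}"
    by (auto simp: Gbar_R_def)
  have m: "r1 \<in> Gbar_R" "r2 \<in> Gbar_R" "r3 \<in> Gbar_R" by (auto simp: Gbar_R_def)
  show ?thesis
  proof (cases "r2 \<in> room P r1")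
    case True
    show ?thesis
    proof (cases "r3 \<in> room P r1")
      case True
      then show ?thesis using caseA \<open>r2 \<in> room P r1\<close> by blast
    next
      case False
      then show ?thesis using caseC[OF R1(1) _ _ _ \<open>r2 \<in> room P r1\<close>] m by blast
    qed
  next
    case False
    note n2 = False
    show ?thesis
    proof (cases "r3 \<in> room P r1")
      case True
      then show ?thesis using caseC[OF R1(2) _ _ _ True n2] m by blast
    next
      case False
      show ?thesis
      proof (cases "r3 \<in> room P r2")
        case True
        have "r1 \<notin> room P r2" using n2 sym by blast
        then show ?thesis using caseC[OF R1(3) _ _ _ True] m by blast
      next
        case False
        then show ?thesis using caseB n2 \<open>r3 \<notin> room P r1\<close> by blast
      qed
    qed
  qed
qed

end


lemma wit_gen:
  assumes "C1 \<inter> C2 = {}" "card C1 = 3" "card C2 = 3" "card (- (C1 \<union> C2)) = 3"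
  shows "outc {C1, C2, - (C1 \<union> C2)}"
    and "vecP {C1, C2, - (C1 \<union> C2)} a = (if a \<in> C1 then card (C1 \<inter> Gbar_R)
           else if a \<in> C2 then card (C2 \<inter> Gbar_R) else card (- (C1 \<union> C2) \<inter> Gbar_R))"
proof -
  have part: "partition_on UNIV {C1, C2, - (C1 \<union> C2)}"
    using assms unfolding partition_on_def disjoint_def by (auto simp del: Compl_Un)
  then show "outc {C1, C2, - (C1 \<union> C2)}"
    unfolding outc_def is_outcome_def RB_UNIV using assms by auto
  show "vecP {C1, C2, - (C1 \<union> C2)} a = (if a \<in> C1 then card (C1 \<inter> Gbar_R)
           else if a \<in> C2 then card (C2 \<inter> Gbar_R) else card (- (C1 \<union> C2) \<inter> Gbar_R))"
    unfolding vecP_def using room3[OF part, of a] by auto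
qed

fun Pwt :: "agent \<times> agent \<times> agent \<Rightarrow> agent set set" where
  "Pwt (\<beta>,x,y) = {{r2,r3,\<beta>}, {r1,x,y}, - ({r2,r3,\<beta>} \<union> {r1,x,y})}"

lemma wit_one:
  assumes "\<beta> \<in> Gbar_B" "x \<in> Gbar_B" "y \<in> Gbar_B" "x \<noteq> y" "x \<noteq> \<beta>" "y \<noteq> \<beta>"
    and "card (- ({r2,r3,\<beta>} \<union> {r1,x,y})) = 3"
  shows "outc (Pwt (\<beta>,x,y)) \<and> vecP (Pwt (\<beta>,x,y)) = vCt (\<beta>,x,y)"
proof -
  have nR: "\<beta> \<notin> Gbar_R" "x \<notin> Gbar_R" "y \<notin> Gbar_R" using assms(1-3)
    by (auto simp: Gbar_R_def Gbar_B_def)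
  have d: "{r2,r3,\<beta>} \<inter> {r1,x,y} = {}" using nR assms(5,6) by (auto simp: Gbar_R_def)
  have c1: "card {r2,r3,\<beta>} = 3" using nR by (auto simp: Gbar_R_def)
  have c2: "card {r1,x,y} = 3" using nR assms(4) by (auto simp: Gbar_R_def)
  have i1: "{r2,r3,\<beta>} \<inter> Gbar_R = {r2,r3}" using nR by (auto simp: Gbar_R_def)
  have i2: "{r1,x,y} \<inter> Gbar_R = {r1}" using nR by (auto simp: Gbar_R_def)
  have i3: "- ({r2,r3,\<beta>} \<union> {r1,x,y}) \<inter> Gbar_R = {}" by (auto simp: Gbar_R_def)
  note W = wit_gen[OF d c1 c2 assms(7)]
  have "vecP (Pwt (\<beta>,x,y)) a = vCt (\<beta>,x,y) a" for a
    using W(2)[of a] i1 i2 i3 nR assms(4-6)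
    by (auto simp: vCt_def vC_def isR_iff Gbar_R_def simp del: Compl_Un)
  then show ?thesis using W(1) by auto
qed

lemma wit:
  assumes "t \<in> set Ws"
  shows "outc (Pwt t) \<and> vecP (Pwt t) = vCt t"
proof -
  have cc: "card (- A) = card (set agents - A)" for A :: "agent set"
    by (simp add: Compl_eq_Diff_UNIV UNIV_agents)
  obtain \<beta> x y where tt: "t = (\<beta>,x,y)" by (cases t) auto
  have "\<beta> \<in> Gbar_B \<and> x \<in> Gbar_B \<and> y \<in> Gbar_B \<and> x \<noteq> y \<and> x \<noteq> \<beta> \<and> y \<noteq> \<beta>
    \<and> card (- ({r2,r3,\<beta>} \<union> {r1,x,y})) = 3"
    using assms unfolding Ws_def tt by (auto simp: Gbar_B_def cc agents_def simp del: Compl_Un)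
  then show ?thesis using wit_one[of \<beta> x y] tt by blast
qed

theorem mainTheorem10:
  shows "\<not> (\<exists>P. popular Gbar_R Gbar_B 3 Gbar_pref P)"
proof
  assume "\<exists>P. popular Gbar_R Gbar_B 3 Gbar_pref P"
  then obtain P where pop: "popular Gbar_R Gbar_B 3 Gbar_pref P" by blast
  then have o: "outc P" unfolding popular_def outc_def by blast
  have bt: "beaten (vecP P)"
  proof -
    have C: "beaten (vC \<rho> \<beta> x y)" if "\<rho> \<in> Gbar_R" "\<beta> \<in> Gbar_B" "x \<in> Gbar_B" "y \<in> Gbar_B"
      "x \<noteq> y" "x \<noteq> \<beta>" "y \<noteq> \<beta>" for \<rho> \<beta> x y
      using check_C_all R_Rl[OF that(1)] B_Bl[OF that(2)] B_Bl[OF that(3)] B_Bl[OF that(4)] that(5-7)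
      unfolding list_all_iff by blast
    show ?thesis using outc.classify[OF o] check_A check_B C by metis
  qed
  then obtain t where t: "t \<in> set Ws" "PhiL (vecP P) (vCt t) < 0"
    unfolding beaten_def list_ex_iff by blast
  have w: "outc (Pwt t)" "vecP (Pwt t) = vCt t" using wit[OF t(1)] by auto
  have "phi Gbar_R Gbar_B Gbar_pref P (Pwt t) < 0"
    using phi_link[OF o w(1)] w(2) t(2) by simp
  moreover have "phi Gbar_R Gbar_B Gbar_pref P (Pwt t) \<ge> 0"
    using pop w(1) unfolding popular_def outc_def by blast
  ultimately show False by simp
qed

end
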